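(* Let $I(x,y)=U(N(x),y)$ where $U$ is a disjunctive uninorm with neutral element $e\in\,]0,1[$ and $N$ is a continuous fuzzy negation. Then the pairs $(U^*,N^* )$, with $U^*$ a disjunctive uninorm with neutral element in $]0,1[$ and $N^*$ a continuous fuzzy negation, satisfying $I(x,y)=U^*(N^*(x),y)$ for all $x,y$, are exactly the pairs $$N^*=N_I^{\alpha},\qquad U^*(x,y)=I(\mathfrak{R}_{N_I^{\alpha}}(x),y)\quad(x,y\in[0,1]),$$ where $\alpha\in\,]0,1[$ is such that the horizontal cut $N_I^\alpha=I(\cdot,\alpha)$ is a continuous fuzzy negation (and then $\alpha$ is the neutral element of $U^*$). In particular $\alpha=e$ fulfills this condition, and the representation of $I$ is unique if and only if $I(\cdot,e)$ is the only horizontal cut $I(\cdot,\alpha)$, $\alpha\in\,]0,1[$, which is a continuous fuzzy negation.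
   Context: A fuzzy negation is a non-increasing map $N:[0,1]\to[0,1]$ with $N(0)=1$, $N(1)=0$. A uninorm is a map $U:[0,1]^2\to[0,1]$ that is commutative, associative, non-decreasing in each variable, and has a neutral element $e\in[0,1]$. A uninorm is disjunctive if $U(1,0)=1$. For $\alpha\in[0,1[$, $N_I^\alpha(x)=I(x,\alpha)$. For a fuzzy negation $M$, the modified pseudo-inverse is $\mathfrak{R}_M(0)=1$ and $\mathfrak{R}_M(x)=\sup\{y\in[0,1]: M(y)>x\}$ for $x\in\,]0,1]$. *)

theory Defs
  imports Complex_Main
begin

text \<open>All functions are real-valued functions on the reals; only their behaviour
on the unit interval [0,1] is relevant.\<close>

definition fuzzy_negation :: "(real \<Rightarrow> real) \<Rightarrow> bool" where
  "fuzzy_negation N \<longleftrightarrow>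
     (\<forall>x\<in>{0..1}. N x \<in> {0..1}) \<and>
     (\<forall>x\<in>{0..1}. \<forall>y\<in>{0..1}. x \<le> y \<longrightarrow> N y \<le> N x) \<and>
     N 0 = 1 \<and> N 1 = 0"

definition continuous_fuzzy_negation :: "(real \<Rightarrow> real) \<Rightarrow> bool" where
  "continuous_fuzzy_negation N \<longleftrightarrow> fuzzy_negation N \<and> continuous_on {0..1} N"

definition uninorm :: "(real \<Rightarrow> real \<Rightarrow> real) \<Rightarrow> real \<Rightarrow> bool" where
  "uninorm U e \<longleftrightarrow>
     e \<in> {0..1} \<and>
     (\<forall>x\<in>{0..1}. \<forall>y\<in>{0..1}. U x y \<in> {0..1}) \<and>
     (\<forall>x\<in>{0..1}. \<forall>y\<in>{0..1}. U x y = U y x) \<and>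
     (\<forall>x\<in>{0..1}. \<forall>y\<in>{0..1}. \<forall>z\<in>{0..1}. U (U x y) z = U x (U y z)) \<and>
     (\<forall>x\<in>{0..1}. \<forall>x'\<in>{0..1}. \<forall>y\<in>{0..1}. x \<le> x' \<longrightarrow> U x y \<le> U x' y) \<and>
     (\<forall>x\<in>{0..1}. \<forall>y\<in>{0..1}. \<forall>y'\<in>{0..1}. y \<le> y' \<longrightarrow> U x y \<le> U x y') \<and>
     (\<forall>x\<in>{0..1}. U e x = x)"

definition disjunctive :: "(real \<Rightarrow> real \<Rightarrow> real) \<Rightarrow> bool" where
  "disjunctive U \<longleftrightarrow> U 1 0 = 1"

definition hcut :: "(real \<Rightarrow> real \<Rightarrow> real) \<Rightarrow> real \<Rightarrow> real \<Rightarrow> real" where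
  "hcut I \<alpha> = (\<lambda>x. I x \<alpha>)"

text \<open>Modified pseudo-inverse; the supremum of the empty set is taken to be 0
(the least element of [0,1]).\<close>
definition mod_pseudo_inv :: "(real \<Rightarrow> real) \<Rightarrow> real \<Rightarrow> real" where
  "mod_pseudo_inv M x =
     (if x = 0 then 1
      else if {y\<in>{0..1}. M y > x} = {} then 0
      else Sup {y\<in>{0..1}. M y > x})"

definition representation ::
  "(real \<Rightarrow> real \<Rightarrow> real) \<Rightarrow> (real \<Rightarrow> real \<Rightarrow> real) \<Rightarrow> (real \<Rightarrow> real) \<Rightarrow> bool" where
  "representation I U' N' \<longleftrightarrow>
     (\<exists>e'\<in>{0<..<1}. uninorm U' e') \<and> disjunctive U' \<and> continuous_fuzzy_negation N' \<and>
     (\<forall>x\<in>{0..1}. \<forall>y\<in>{0..1}. I x y = U' (N' x) y)"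

end

theory Submission imports Defs "HOL-Analysis.Elementary_Metric_Spaces" begin

lemma pinv:
  assumes M: "continuous_fuzzy_negation M" and x: "x \<in> {0..1}"
  shows "mod_pseudo_inv M x \<in> {0..1} \<and> M (mod_pseudo_inv M x) = x"
proof -
  have rng: "\<And>y. y \<in> {0..1} \<Longrightarrow> M y \<in> {0..1}" and M0: "M 0 = 1" and M1: "M 1 = 0"
    and cont: "continuous_on {0..1} M"
    using M by (auto simp: continuous_fuzzy_negation_def fuzzy_negation_def)
  define S where "S = {y\<in>{0..1::real}. M y > x}"
  show ?thesis
  proof (cases "x = 0")
    case True thus ?thesis by (simp add: mod_pseudo_inv_def M1)
  next
    case x0: False
    show ?thesis
    proof (cases "x = 1")
      case True
      have "S = {}" using rng True by (force simp: S_def)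
      hence "mod_pseudo_inv M x = 0" using x0 by (simp add: mod_pseudo_inv_def S_def)
      thus ?thesis using True M0 by simp
    next
      case x1: False
      have "0 \<in> S" using M0 x x1 by (auto simp: S_def)
      hence ne: "S \<noteq> {}" by auto
      have bdd: "bdd_above S" by (auto simp: S_def bdd_above_def)
      define s where "s = Sup S"
      have R: "mod_pseudo_inv M x = s" using x0 ne unfolding mod_pseudo_inv_def S_def s_def by auto
      have s0: "0 \<le> s" using cSup_upper[OF \<open>0\<in>S\<close> bdd] s_def by simp
      have s1: "s \<le> 1" unfolding s_def by (rule cSup_least[OF ne]) (auto simp: S_def)
      have sup: "\<And>y. y \<in> S \<Longrightarrow> y \<le> s" using cSup_upper[OF _ bdd] s_def by simp
      have ge: "M s \<ge> x"
      proof (rule ccontr)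
        assume "\<not> x \<le> M s"
        then obtain d where d: "d > 0" "\<forall>y\<in>{0..1}. dist y s < d \<longrightarrow> dist (M y) (M s) < x - M s"
          using cont s0 s1 unfolding continuous_on_iff by (metis atLeastAtMost_iff diff_gt_0_iff_gt not_le)
        obtain y where y: "y \<in> S" "s - d < y" using less_cSupD[OF ne, of "s - d"] d(1) s_def by auto
        have "y \<le> s" using sup y by auto
        hence "dist y s < d" using y d by (simp add: dist_real_def)
        hence "M y - M s < x - M s" using d y by (auto simp: S_def dist_real_def)
        thus False using y by (auto simp: S_def)
      qed
      have le: "M s \<le> x"
      proof (rule ccontr)
        assume a: "\<not> M s \<le> x"
        hence "s \<noteq> 1" using M1 x by auto
        then have s1': "s < 1" using s1 by auto
        obtain d where d: "d > 0" "\<forall>y\<in>{0..1}. dist y s < d \<longrightarrow> dist (M y) (M s) < M s - x"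
          using cont s0 s1 a unfolding continuous_on_iff by (metis atLeastAtMost_iff diff_gt_0_iff_gt not_le)
        define y where "y = min 1 (s + d/2)"
        have yin: "y \<in> {0..1}" using s0 s1 d by (auto simp: y_def)
        have "dist y s < d" using s1' d s0 by (auto simp: y_def dist_real_def)
        hence "M s - M y < M s - x" using d yin by (auto simp: dist_real_def)
        hence "y \<in> S" using yin by (auto simp: S_def)
        hence "y \<le> s" by (rule sup)
        thus False using s1' d by (auto simp: y_def)
      qed
      show ?thesis using R ge le s0 s1 by auto
    qed
  qed
qed

lemma cfn_cong: "(\<forall>x\<in>{0..1}. f x = g x) \<Longrightarrow> continuous_fuzzy_negation f \<Longrightarrow> continuous_fuzzy_negation g"
  unfolding continuous_fuzzy_negation_def fuzzy_negation_def
  using continuous_on_cong[of "{0..1}" "{0..1}" f g] by auto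

lemma uninorm_cong: "(\<forall>x\<in>{0..1}. \<forall>y\<in>{0..1}. f x y = g x y) \<Longrightarrow> uninorm f e \<Longrightarrow> uninorm g e"
  unfolding uninorm_def by (simp (no_asm_simp)) auto

lemma key:
  assumes Ue: "uninorm U e" and dj: "disjunctive U" and Nc: "continuous_fuzzy_negation N"
    and I_def: "\<And>x y. I x y = U (N x) y"
    and e': "e' \<in> {0<..<1}" and Mc: "continuous_fuzzy_negation (hcut I e')"
  shows "uninorm (\<lambda>x y. I (mod_pseudo_inv (hcut I e') x) y) e'
    \<and> disjunctive (\<lambda>x y. I (mod_pseudo_inv (hcut I e') x) y)
    \<and> (\<forall>x\<in>{0..1}. \<forall>y\<in>{0..1}. I x y = I (mod_pseudo_inv (hcut I e') (hcut I e' x)) y)"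
proof -
  define M where "M = hcut I e'"
  define R where "R = mod_pseudo_inv M"
  have e01: "e \<in> {0..1}" and rg: "\<And>x y. x\<in>{0..1} \<Longrightarrow> y\<in>{0..1} \<Longrightarrow> U x y \<in> {0..1}"
    and cm: "\<And>x y. x\<in>{0..1} \<Longrightarrow> y\<in>{0..1} \<Longrightarrow> U x y = U y x"
    and as: "\<And>x y z. x\<in>{0..1} \<Longrightarrow> y\<in>{0..1} \<Longrightarrow> z\<in>{0..1} \<Longrightarrow> U (U x y) z = U x (U y z)"
    and m1: "\<And>x x' y. x\<in>{0..1} \<Longrightarrow> x'\<in>{0..1} \<Longrightarrow> y\<in>{0..1} \<Longrightarrow> x \<le> x' \<Longrightarrow> U x y \<le> U x' y"
    and m2: "\<And>x y y'. x\<in>{0..1} \<Longrightarrow> y\<in>{0..1} \<Longrightarrow> y'\<in>{0..1} \<Longrightarrow> y \<le> y' \<Longrightarrow> U x y \<le> U x y'"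
    and nt: "\<And>x. x\<in>{0..1} \<Longrightarrow> U e x = x"
    using Ue unfolding uninorm_def by blast+
  have Nr: "\<And>x. x\<in>{0..1} \<Longrightarrow> N x \<in> {0..1}" using Nc
    by (auto simp: continuous_fuzzy_negation_def fuzzy_negation_def)
  have e'1: "e' \<in> {0..1}" using e' by auto
  have Mdef: "\<And>x. M x = U (N x) e'" by (simp add: M_def hcut_def I_def)
  have Mc': "continuous_fuzzy_negation M" using Mc M_def by simp
  have M0: "M 0 = 1" and M1: "M 1 = 0" and Mcont: "continuous_on {0..1} M"
    using Mc' by (auto simp: continuous_fuzzy_negation_def fuzzy_negation_def)
  obtain x0 where x0: "0 \<le> x0" "x0 \<le> 1" "M x0 = e"
    using IVT2'[of M 1 e 0] M0 M1 Mcont e01 by auto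
  define c where "c = N x0"
  have c01: "c \<in> {0..1}" using Nr x0 by (auto simp: c_def)
  have ce: "U c e' = e" using x0 Mdef c_def by simp
  have ec: "U e' c = e" using ce cm c01 e'1 by simp
  have trick: "U a y = U (U a e') (U c y)" if a: "a\<in>{0..1}" and y: "y\<in>{0..1}" for a y
  proof -
    have "U a y = U a (U e y)" using nt y by simp
    also have "\<dots> = U a (U (U e' c) y)" using ec by simp
    also have "\<dots> = U a (U e' (U c y))" using as e'1 c01 y by simp
    also have "\<dots> = U (U a e') (U c y)" using as a e'1 rg c01 y by simp
    finally show ?thesis .
  qed
  define V where "V = (\<lambda>x y. U c (U x y))"
  have IV: "I (R x) y = V x y" if x: "x\<in>{0..1}" and y: "y\<in>{0..1}" for x y
  proof -
    have Rx: "R x \<in> {0..1}" "M (R x) = x" using pinv[OF Mc' x] R_def by auto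
    define a where "a = N (R x)"
    have a01: "a \<in> {0..1}" using Nr Rx by (simp add: a_def)
    have ax: "U a e' = x" using Rx Mdef a_def by simp
    have "I (R x) y = U a y" by (simp add: I_def a_def)
    also have "\<dots> = U x (U c y)" using trick[OF a01 y] ax by simp
    also have "\<dots> = U (U x c) y" using as x c01 y by simp
    also have "\<dots> = U (U c x) y" using cm x c01 by simp
    also have "\<dots> = V x y" using as x c01 y by (simp add: V_def)
    finally show ?thesis .
  qed
  have Vr: "\<And>x y. x\<in>{0..1} \<Longrightarrow> y\<in>{0..1} \<Longrightarrow> V x y \<in> {0..1}"
    using rg c01 by (simp add: V_def)
  have uV: "uninorm V e'"
    unfolding uninorm_def
  proof (intro conjI ballI impI)
    show "e' \<in> {0..1}" by (rule e'1)
  next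
    fix x y :: real assume "x\<in>{0..1}" "y\<in>{0..1}" thus "V x y \<in> {0..1}" by (rule Vr)
  next
    fix x y :: real assume "x\<in>{0..1}" "y\<in>{0..1}" thus "V x y = V y x" using cm by (simp add: V_def)
  next
    fix x y z :: real assume x: "x\<in>{0..1}" and y: "y\<in>{0..1}" and z: "z\<in>{0..1}"
    have "V (V x y) z = U c (U (U c (U x y)) z)" by (simp add: V_def)
    also have "\<dots> = U c (U c (U (U x y) z))" using as c01 rg x y z by simp
    also have "\<dots> = U c (U c (U x (U y z)))" using as x y z by simp
    finally have 1: "V (V x y) z = U c (U c (U x (U y z)))" .
    have "V x (V y z) = U c (U x (U c (U y z)))" by (simp add: V_def)
    also have "\<dots> = U c (U (U x c) (U y z))" using as x c01 rg y z by simp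
    also have "\<dots> = U c (U (U c x) (U y z))" using cm x c01 by simp
    also have "\<dots> = U c (U c (U x (U y z)))" using as x c01 rg y z by simp
    finally show "V (V x y) z = V x (V y z)" using 1 by simp
  next
    fix x x' y :: real assume "x\<in>{0..1}" "x'\<in>{0..1}" "y\<in>{0..1}" "x \<le> x'"
    thus "V x y \<le> V x' y" unfolding V_def by (intro m2 c01 rg m1)
  next
    fix x y y' :: real assume "x\<in>{0..1}" "y\<in>{0..1}" "y'\<in>{0..1}" "y \<le> y'"
    thus "V x y \<le> V x y'" unfolding V_def by (intro m2 c01 rg)
  next
    fix x :: real assume x: "x\<in>{0..1}"
    have "V e' x = U (U c e') x" using as c01 e'1 x by (simp add: V_def)
    thus "V e' x = x" using ce nt x by simp
  qed
  have U10: "U 1 0 = 1" using dj by (simp add: disjunctive_def)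
  have "V 1 0 = U c 1" using U10 by (simp add: V_def)
  moreover have "U 0 1 \<le> U c 1" using m1[of 0 c 1] c01 by simp
  moreover have "U 0 1 = 1" using cm[of 0 1] U10 by simp
  moreover have "U c 1 \<le> 1" using rg c01 by simp
  ultimately have dV: "V 1 0 = 1" by simp
  have rep: "I x y = V (M x) y" if x: "x\<in>{0..1}" and y: "y\<in>{0..1}" for x y
  proof -
    define n where "n = N x"
    have n01: "n \<in> {0..1}" using Nr x n_def by simp
    have "V (M x) y = U c (U (U n e') y)" by (simp add: V_def Mdef n_def)
    also have "\<dots> = U (U c (U n e')) y" using as c01 rg n01 e'1 y by simp
    also have "\<dots> = U (U c (U e' n)) y" using cm n01 e'1 by simp
    also have "\<dots> = U (U (U c e') n) y" using as c01 n01 e'1 by simp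
    also have "\<dots> = U n y" using ce nt n01 by simp
    finally show ?thesis by (simp add: I_def n_def)
  qed
  have Mr: "\<And>x. x\<in>{0..1} \<Longrightarrow> M x \<in> {0..1}" using Mc'
    by (auto simp: continuous_fuzzy_negation_def fuzzy_negation_def)
  have eq: "\<forall>x\<in>{0..1}. \<forall>y\<in>{0..1}. V x y = I (R x) y" using IV by simp
  show ?thesis unfolding M_def[symmetric] R_def[symmetric]
  proof (intro conjI ballI)
    show "uninorm (\<lambda>x y. I (R x) y) e'" by (rule uninorm_cong[OF eq uV])
    show "disjunctive (\<lambda>x y. I (R x) y)" using IV[of 1 0] dV by (simp add: disjunctive_def)
    fix x y :: real assume x: "x\<in>{0..1}" and y: "y\<in>{0..1}"
    show "I x y = I (R (M x)) y" using rep[OF x y] IV[OF Mr[OF x] y] by simp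
  qed
qed

lemma char:
  assumes Ue: "uninorm U e" and dj: "disjunctive U" and Nc: "continuous_fuzzy_negation N"
    and I_def: "\<And>x y. I x y = U (N x) y"
  shows "(e' \<in> {0<..<1} \<and> uninorm U' e' \<and> disjunctive U' \<and> continuous_fuzzy_negation N' \<and>
         (\<forall>x\<in>{0..1}. \<forall>y\<in>{0..1}. I x y = U' (N' x) y))
        \<longleftrightarrow>
        (e' \<in> {0<..<1} \<and> continuous_fuzzy_negation (hcut I e') \<and>
         (\<forall>x\<in>{0..1}. N' x = hcut I e' x) \<and>
         (\<forall>x\<in>{0..1}. \<forall>y\<in>{0..1}. U' x y = I (mod_pseudo_inv (hcut I e') x) y))"
proof
  assume L: "e' \<in> {0<..<1} \<and> uninorm U' e' \<and> disjunctive U' \<and> continuous_fuzzy_negation N' \<and>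
         (\<forall>x\<in>{0..1}. \<forall>y\<in>{0..1}. I x y = U' (N' x) y)"
  hence e': "e' \<in> {0<..<1}" and u: "uninorm U' e'" and N'c: "continuous_fuzzy_negation N'"
    and rep: "\<forall>x\<in>{0..1}. \<forall>y\<in>{0..1}. I x y = U' (N' x) y" by auto
  have N'r: "\<And>x. x\<in>{0..1} \<Longrightarrow> N' x \<in> {0..1}" using N'c
    by (auto simp: continuous_fuzzy_negation_def fuzzy_negation_def)
  have cm: "\<And>x y. x\<in>{0..1} \<Longrightarrow> y\<in>{0..1} \<Longrightarrow> U' x y = U' y x"
    and nt: "\<And>x. x\<in>{0..1} \<Longrightarrow> U' e' x = x" using u unfolding uninorm_def by blast+
  have e'1: "e' \<in> {0..1}" using e' by auto
  have hN: "\<forall>x\<in>{0..1}. N' x = hcut I e' x"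
  proof
    fix x :: real assume x: "x \<in> {0..1}"
    have "hcut I e' x = U' (N' x) e'" using rep x e'1 by (simp add: hcut_def)
    also have "\<dots> = N' x" using cm[OF N'r[OF x] e'1] nt[OF N'r[OF x]] by simp
    finally show "N' x = hcut I e' x" by simp
  qed
  have Mc: "continuous_fuzzy_negation (hcut I e')" by (rule cfn_cong[OF hN N'c])
  have "\<forall>x\<in>{0..1}. \<forall>y\<in>{0..1}. U' x y = I (mod_pseudo_inv (hcut I e') x) y"
  proof (intro ballI)
    fix x y :: real assume x: "x \<in> {0..1}" and y: "y \<in> {0..1}"
    have p: "mod_pseudo_inv (hcut I e') x \<in> {0..1}" "hcut I e' (mod_pseudo_inv (hcut I e') x) = x"
      using pinv[OF Mc x] by auto
    show "U' x y = I (mod_pseudo_inv (hcut I e') x) y" using rep p hN y by metis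
  qed
  thus "e' \<in> {0<..<1} \<and> continuous_fuzzy_negation (hcut I e') \<and>
         (\<forall>x\<in>{0..1}. N' x = hcut I e' x) \<and>
         (\<forall>x\<in>{0..1}. \<forall>y\<in>{0..1}. U' x y = I (mod_pseudo_inv (hcut I e') x) y)"
    using e' Mc hN by blast
next
  assume R: "e' \<in> {0<..<1} \<and> continuous_fuzzy_negation (hcut I e') \<and>
         (\<forall>x\<in>{0..1}. N' x = hcut I e' x) \<and>
         (\<forall>x\<in>{0..1}. \<forall>y\<in>{0..1}. U' x y = I (mod_pseudo_inv (hcut I e') x) y)"
  hence e': "e' \<in> {0<..<1}" and Mc: "continuous_fuzzy_negation (hcut I e')"
    and hN: "\<forall>x\<in>{0..1}. N' x = hcut I e' x"
    and hU: "\<forall>x\<in>{0..1}. \<forall>y\<in>{0..1}. U' x y = I (mod_pseudo_inv (hcut I e') x) y" by auto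
  note K = key[OF Ue dj Nc I_def e' Mc]
  have hU': "\<forall>x\<in>{0..1}. \<forall>y\<in>{0..1}. I (mod_pseudo_inv (hcut I e') x) y = U' x y" using hU by simp
  have u: "uninorm U' e'" using uninorm_cong[OF hU'] K by blast
  have d: "disjunctive U'" using K hU by (simp add: disjunctive_def)
  have N'c: "continuous_fuzzy_negation N'" using cfn_cong[of "hcut I e'" N'] hN Mc by simp
  have Mr: "\<And>x. x\<in>{0..1} \<Longrightarrow> hcut I e' x \<in> {0..1}" using Mc
    by (auto simp: continuous_fuzzy_negation_def fuzzy_negation_def)
  have "\<forall>x\<in>{0..1}. \<forall>y\<in>{0..1}. I x y = U' (N' x) y"
    using K hU hN Mr by simp
  thus "e' \<in> {0<..<1} \<and> uninorm U' e' \<and> disjunctive U' \<and> continuous_fuzzy_negation N' \<and>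
         (\<forall>x\<in>{0..1}. \<forall>y\<in>{0..1}. I x y = U' (N' x) y)" using e' u d N'c by blast
qed

theorem mainTheorem5:
  fixes U :: "real \<Rightarrow> real \<Rightarrow> real" and N :: "real \<Rightarrow> real"
    and I :: "real \<Rightarrow> real \<Rightarrow> real" and e :: real
  assumes "e \<in> {0<..<1}" and "uninorm U e" and "disjunctive U"
    and "continuous_fuzzy_negation N"
    and I_def: "\<And>x y. I x y = U (N x) y"
  shows
    "(\<forall>U' N' e'.
        (e' \<in> {0<..<1} \<and> uninorm U' e' \<and> disjunctive U' \<and> continuous_fuzzy_negation N' \<and>
         (\<forall>x\<in>{0..1}. \<forall>y\<in>{0..1}. I x y = U' (N' x) y))
        \<longleftrightarrow>
        (e' \<in> {0<..<1} \<and> continuous_fuzzy_negation (hcut I e') \<and>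
         (\<forall>x\<in>{0..1}. N' x = hcut I e' x) \<and>
         (\<forall>x\<in>{0..1}. \<forall>y\<in>{0..1}. U' x y = I (mod_pseudo_inv (hcut I e') x) y)))
     \<and> continuous_fuzzy_negation (hcut I e)
     \<and> ((\<forall>U1 N1 U2 N2. representation I U1 N1 \<and> representation I U2 N2 \<longrightarrow>
            (\<forall>x\<in>{0..1}. N1 x = N2 x) \<and> (\<forall>x\<in>{0..1}. \<forall>y\<in>{0..1}. U1 x y = U2 x y))
        \<longleftrightarrow> (\<forall>\<alpha>\<in>{0<..<1}. continuous_fuzzy_negation (hcut I \<alpha>) \<longrightarrow> \<alpha> = e))"
proof -
  note C = char[OF assms(2,3,4) I_def]
  have e1: "e \<in> {0..1}" using assms(1) by auto
  have cm: "\<And>x y. x\<in>{0..1} \<Longrightarrow> y\<in>{0..1} \<Longrightarrow> U x y = U y x"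
    and nt: "\<And>x. x\<in>{0..1} \<Longrightarrow> U e x = x" using assms(2) unfolding uninorm_def by blast+
  have Nr: "\<And>x. x\<in>{0..1} \<Longrightarrow> N x \<in> {0..1}" using assms(4)
    by (auto simp: continuous_fuzzy_negation_def fuzzy_negation_def)
  have hN: "\<forall>x\<in>{0..1}. N x = hcut I e x"
    using cm[OF Nr e1] nt[OF Nr] by (simp add: hcut_def I_def)
  have He: "continuous_fuzzy_negation (hcut I e)" by (rule cfn_cong[OF hN assms(4)])
  have repU: "representation I U N" unfolding representation_def
    using assms(1-4) I_def by blast
  have repE: "representation I U' N' \<longleftrightarrow> (\<exists>e'. e' \<in> {0<..<1} \<and> uninorm U' e' \<and> disjunctive U' \<and> continuous_fuzzy_negation N' \<and>
         (\<forall>x\<in>{0..1}. \<forall>y\<in>{0..1}. I x y = U' (N' x) y))" for U' N'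
    unfolding representation_def by blast
  have third: "(\<forall>U1 N1 U2 N2. representation I U1 N1 \<and> representation I U2 N2 \<longrightarrow>
            (\<forall>x\<in>{0..1}. N1 x = N2 x) \<and> (\<forall>x\<in>{0..1}. \<forall>y\<in>{0..1}. U1 x y = U2 x y))
        \<longleftrightarrow> (\<forall>\<alpha>\<in>{0<..<1}. continuous_fuzzy_negation (hcut I \<alpha>) \<longrightarrow> \<alpha> = e)"
  proof
    assume A: "\<forall>U1 N1 U2 N2. representation I U1 N1 \<and> representation I U2 N2 \<longrightarrow>
            (\<forall>x\<in>{0..1}. N1 x = N2 x) \<and> (\<forall>x\<in>{0..1}. \<forall>y\<in>{0..1}. U1 x y = U2 x y)"
    show "\<forall>\<alpha>\<in>{0<..<1}. continuous_fuzzy_negation (hcut I \<alpha>) \<longrightarrow> \<alpha> = e"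
    proof (intro ballI impI)
      fix \<alpha> :: real assume a: "\<alpha> \<in> {0<..<1}" and ac: "continuous_fuzzy_negation (hcut I \<alpha>)"
      define Ua where "Ua = (\<lambda>x y. I (mod_pseudo_inv (hcut I \<alpha>) x) y)"
      have "\<alpha> \<in> {0<..<1} \<and> uninorm Ua \<alpha> \<and> disjunctive Ua \<and> continuous_fuzzy_negation (hcut I \<alpha>) \<and>
         (\<forall>x\<in>{0..1}. \<forall>y\<in>{0..1}. I x y = Ua (hcut I \<alpha> x) y)"
        using C[of \<alpha> Ua "hcut I \<alpha>"] a ac by (simp add: Ua_def)
      hence ua: "uninorm Ua \<alpha>" and ra: "representation I Ua (hcut I \<alpha>)"
        unfolding representation_def by blast+
      have eq: "\<forall>x\<in>{0..1}. \<forall>y\<in>{0..1}. U x y = Ua x y" using A repU ra by blast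
      have a1: "\<alpha> \<in> {0..1}" using a by auto
      have "Ua \<alpha> e = e" using ua e1 unfolding uninorm_def by blast
      moreover have "U \<alpha> e = \<alpha>" using cm[OF a1 e1] nt[OF a1] by simp
      ultimately show "\<alpha> = e" using eq a1 e1 by metis
    qed
  next
    assume B: "\<forall>\<alpha>\<in>{0<..<1}. continuous_fuzzy_negation (hcut I \<alpha>) \<longrightarrow> \<alpha> = e"
    show "\<forall>U1 N1 U2 N2. representation I U1 N1 \<and> representation I U2 N2 \<longrightarrow>
            (\<forall>x\<in>{0..1}. N1 x = N2 x) \<and> (\<forall>x\<in>{0..1}. \<forall>y\<in>{0..1}. U1 x y = U2 x y)"
    proof (intro allI impI)
      fix U1 N1 U2 N2 assume r: "representation I U1 N1 \<and> representation I U2 N2"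
      obtain e1' where 1: "e1' \<in> {0<..<1} \<and> uninorm U1 e1' \<and> disjunctive U1 \<and> continuous_fuzzy_negation N1 \<and>
         (\<forall>x\<in>{0..1}. \<forall>y\<in>{0..1}. I x y = U1 (N1 x) y)" using r repE by blast
      obtain e2' where 2: "e2' \<in> {0<..<1} \<and> uninorm U2 e2' \<and> disjunctive U2 \<and> continuous_fuzzy_negation N2 \<and>
         (\<forall>x\<in>{0..1}. \<forall>y\<in>{0..1}. I x y = U2 (N2 x) y)" using r repE by blast
      have c1: "e1' \<in> {0<..<1} \<and> continuous_fuzzy_negation (hcut I e1') \<and>
         (\<forall>x\<in>{0..1}. N1 x = hcut I e1' x) \<and>
         (\<forall>x\<in>{0..1}. \<forall>y\<in>{0..1}. U1 x y = I (mod_pseudo_inv (hcut I e1') x) y)"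
        using C[of e1' U1 N1] 1 by blast
      have c2: "e2' \<in> {0<..<1} \<and> continuous_fuzzy_negation (hcut I e2') \<and>
         (\<forall>x\<in>{0..1}. N2 x = hcut I e2' x) \<and>
         (\<forall>x\<in>{0..1}. \<forall>y\<in>{0..1}. U2 x y = I (mod_pseudo_inv (hcut I e2') x) y)"
        using C[of e2' U2 N2] 2 by blast
      have "e1' = e" "e2' = e" using B c1 c2 by blast+
      thus "(\<forall>x\<in>{0..1}. N1 x = N2 x) \<and> (\<forall>x\<in>{0..1}. \<forall>y\<in>{0..1}. U1 x y = U2 x y)"
        using c1 c2 by simp
    qed
  qed
  show ?thesis using C He third by blast
qed

end
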